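(* Let $\mathsf X$ be a separable Hilbert space and let $\mathbf F$ assign to every $\mu\in\mathcal P_b(\mathsf X)$ a measure $\mathbf F[\mu]\in\mathcal P_b(\mathsf X\times\mathsf X)$ with $\mathsf x_\sharp\mathbf F[\mu]=\mu$, such that (F1) there is $a\ge0$ with $\langle v,x\rangle\le a(1+|x|^2)$ for $\mathbf F[\mu]$-a.e. $(x,v)$, for every $\mu\in\mathcal P_b(\mathsf X)$; (F2) for every $R>0$ there is $\rho_R>0$ such that $\operatorname{supp}(\mu)\subset B_R(0)$ implies $\operatorname{supp}(\mathbf F[\mu])\subset B_{\rho_R}(0)$. Let $\bar\mu\in\mathcal P_b(\mathsf X)$ and $T>0$. Then the Explicit Euler scheme for $\mathbf F$ is approximately solvable at $\bar\mu$ up to time $T$.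
   Context: $\mathcal P_b(Y)$: Borel probability measures with bounded support; $\mathsf x(x,v)=x$, $\exp^\tau(x,v)=x+\tau v$, $|\Phi|_2^2=\int|v|^2d\Phi$; $W_2$ quadratic Wasserstein distance. Viewing $\mathbf F$ as the MPVF $\{\mathbf F[\mu]:\mu\in\mathcal P_b(\mathsf X)\}$ with domain $D(\mathbf F)=\mathcal P_b(\mathsf X)$: for $\tau>0$, $N=\lceil T/\tau\rceil$, $L>0$, the set $\mathscr E(\mu,\tau,T,L)$ is nonempty iff there is a sequence $(M^n,\Phi^n)_{0\le n\le N}$ with $M^0=\mu$, $\Phi^n=\mathbf F[M^n]$, $|\Phi^n|_2\le L$ ($n<N$), $M^n=(\exp^\tau)_\sharp\Phi^{n-1}$ ($n\ge1$), all $M^n\in D(\mathbf F)$. Approximate solvability at $\bar\mu$ up to $T$: there exist $\bar\tau,L>0$ and $(\bar\mu^j)_j\subset D(\mathbf F)$ with finite supports, $W_2(\bar\mu^j,\bar\mu)\to0$, and $\mathscr E(\bar\mu^j,\tau,T,L)\ne\emptyset$ for every $0<\tau<\bar\tau$ and every $j$. *)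

theory Defs
  imports "HOL-Probability.Probability"
begin

definition msupp :: "'a::metric_space measure \<Rightarrow> 'a set" where
  "msupp \<mu> = {x. \<forall>e>0. emeasure \<mu> (ball x e) > 0}"

definition Pb :: "'a::metric_space measure set" where
  "Pb = {\<mu>. sets \<mu> = sets borel \<and> prob_space \<mu> \<and> bounded (msupp \<mu>)}"

definition vel_sq :: "('a::real_normed_vector \<times> 'a) measure \<Rightarrow> ennreal" where
  "vel_sq \<Phi> = (\<integral>\<^sup>+ p. ennreal ((norm (snd p))\<^sup>2) \<partial>\<Phi>)"

definition exp_map :: "real \<Rightarrow> ('a::real_normed_vector \<times> 'a) \<Rightarrow> 'a" where
  "exp_map \<tau> p = fst p + \<tau> *\<^sub>R snd p"

definition couplings :: "'a::metric_space measure \<Rightarrow> 'a measure \<Rightarrow> ('a \<times> 'a) measure set" where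
  "couplings \<mu> \<nu> = {\<gamma>. sets \<gamma> = sets borel \<and> prob_space \<gamma> \<and>
      distr \<gamma> borel fst = \<mu> \<and> distr \<gamma> borel snd = \<nu>}"

definition W2 :: "'a::real_normed_vector measure \<Rightarrow> 'a measure \<Rightarrow> real" where
  "W2 \<mu> \<nu> = sqrt (enn2real (INF \<gamma>\<in>couplings \<mu> \<nu>.
        \<integral>\<^sup>+ p. ennreal ((norm (fst p - snd p))\<^sup>2) \<partial>\<gamma>))"

definition euler_set ::
  "('a::real_normed_vector measure \<Rightarrow> ('a \<times> 'a) measure) \<Rightarrow> 'a measure \<Rightarrow> real \<Rightarrow> real \<Rightarrow> real
     \<Rightarrow> ((nat \<Rightarrow> 'a measure) \<times> (nat \<Rightarrow> ('a \<times> 'a) measure)) set" where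
  "euler_set F \<mu> \<tau> T L = (let N = nat \<lceil>T / \<tau>\<rceil> in
     {(M, \<Phi>). M 0 = \<mu> \<and>
        (\<forall>n\<le>N. \<Phi> n = F (M n)) \<and>
        (\<forall>n<N. vel_sq (\<Phi> n) \<le> ennreal (L\<^sup>2)) \<and>
        (\<forall>n. 1 \<le> n \<and> n \<le> N \<longrightarrow> M n = distr (\<Phi> (n - 1)) borel (exp_map \<tau>)) \<and>
        (\<forall>n\<le>N. M n \<in> Pb)})"

definition approx_solvable ::
  "('a::real_normed_vector measure \<Rightarrow> ('a \<times> 'a) measure) \<Rightarrow> 'a measure \<Rightarrow> real \<Rightarrow> bool" where
  "approx_solvable F \<mu> T \<longleftrightarrow> (\<exists>\<tau>0 L (\<mu>s :: nat \<Rightarrow> 'a measure). \<tau>0 > 0 \<and> L > 0 \<and>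
      (\<forall>j. \<mu>s j \<in> Pb \<and> finite (msupp (\<mu>s j))) \<and>
      (\<lambda>j. W2 (\<mu>s j) \<mu>) \<longlonglongrightarrow> 0 \<and>
      (\<forall>\<tau> j. 0 < \<tau> \<and> \<tau> < \<tau>0 \<longrightarrow> euler_set F (\<mu>s j) \<tau> T L \<noteq> {}))"

end

theory Submission
  imports Defs
begin


lemma AE_in_msupp:
  fixes M :: "'a::{metric_space, second_countable_topology} measure"
  assumes sM: "sets M = sets borel"
  shows "AE x in M. x \<in> msupp M"
proof -
  define U where "U = {ball x e | x e. e > 0 \<and> emeasure M (ball x e) = 0}"
  have opU: "\<And>S. S \<in> U \<Longrightarrow> open S" unfolding U_def by auto
  obtain U' where U': "U' \<subseteq> U" "countable U'" "\<Union>U' = \<Union>U"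
    using Lindelof[OF opU] by blast
  have "(\<Union>S\<in>U'. S) \<in> null_sets M"
  proof (rule null_sets_UN'[OF U'(2)])
    fix S assume "S \<in> U'"
    then have "S \<in> U" using U' by auto
    then obtain x e where "S = ball x e" "emeasure M (ball x e) = 0" unfolding U_def by auto
    then show "S \<in> null_sets M" using sM by (auto simp: null_sets_def)
  qed
  moreover have "{x \<in> space M. x \<notin> msupp M} \<subseteq> (\<Union>S\<in>U'. S)"
  proof
    fix x assume "x \<in> {x \<in> space M. x \<notin> msupp M}"
    then obtain e where "e > 0" "\<not> emeasure M (ball x e) > 0" unfolding msupp_def by auto
    then have "ball x e \<in> U" unfolding U_def by (auto simp: zero_less_iff_neq_zero)
    then have "x \<in> \<Union>U" using \<open>e > 0\<close> by (metis UnionI centre_in_ball)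
    then show "x \<in> (\<Union>S\<in>U'. S)" using U' by auto
  qed
  ultimately show ?thesis by (rule AE_I')
qed

lemma msupp_subset_closed:
  fixes M :: "'a::metric_space measure"
  assumes sM: "sets M = sets borel" and C: "closed C" and ae: "AE x in M. x \<in> C"
  shows "msupp M \<subseteq> C"
proof
  fix y assume y: "y \<in> msupp M"
  show "y \<in> C"
  proof (rule ccontr)
    assume "y \<notin> C"
    then obtain e where e: "e > 0" "ball y e \<subseteq> - C"
      using C by (metis open_Compl open_contains_ball ComplI)
    have sp: "space M = UNIV" using sets_eq_imp_space_eq[OF sM] by simp
    have "emeasure M (- C) = 0"
      using AE_iff_measurable[of "- C" M "\<lambda>x. x \<in> C"] ae sM C sp by auto
    moreover have "emeasure M (ball y e) \<le> emeasure M (- C)"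
      by (rule emeasure_mono[OF e(2)]) (use sM C in auto)
    moreover have "emeasure M (ball y e) > 0" using y e unfolding msupp_def by auto
    ultimately show False by simp
  qed
qed


primrec qf :: "(nat \<Rightarrow> 'a::real_normed_vector) \<Rightarrow> real \<Rightarrow> real \<Rightarrow> nat \<Rightarrow> 'a \<Rightarrow> 'a" where
  "qf d R e 0 x = (if dist x (d 0) < e \<and> norm (d 0) < R then d 0 else 0)"
| "qf d R e (Suc n) x = (if dist x (d (Suc n)) < e \<and> norm (d (Suc n)) < R then d (Suc n) else qf d R e n x)"

lemma qf_norm: "R > 0 \<Longrightarrow> norm (qf d R e n x) < R"
  by (induct n) auto

lemma qf_range: "qf d R e n x \<in> insert 0 (d ` {..n})"
  by (induct n) auto

lemma qf_found: "k \<le> n \<Longrightarrow> dist x (d k) < e \<Longrightarrow> norm (d k) < R \<Longrightarrow> dist x (qf d R e n x) < e"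
proof (induct n)
  case 0 then show ?case by auto
next
  case (Suc n) then show ?case by (cases "k = Suc n") auto
qed

lemma qf_notfound: "(\<forall>k\<le>n. \<not> (dist x (d k) < e \<and> norm (d k) < R)) \<Longrightarrow> qf d R e n x = 0"
  by (induct n) auto

lemma open_cond: "open {x::'a::metric_space. dist x c < e \<and> b}"
proof -
  have "{x::'a. dist x c < e \<and> b} = (if b then ball c e else {})" by (auto simp: dist_commute)
  then show ?thesis by simp
qed

lemma qf_meas: "qf d R e n \<in> borel_measurable borel"
proof (induct n)
  case 0
  show ?case unfolding qf.simps
    by (rule measurable_If) (auto intro: borel_open open_cond)
next
  case (Suc n)
  show ?case unfolding qf.simps
    by (rule measurable_If[OF _ Suc]) (auto intro: borel_open open_cond)
qed


lemma W2_le_cost: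
  fixes \<mu> \<nu> :: "'a::real_normed_vector measure"
  assumes "\<gamma> \<in> couplings \<nu> \<mu>" "(\<integral>\<^sup>+ p. ennreal ((norm (fst p - snd p))\<^sup>2) \<partial>\<gamma>) \<le> ennreal c" "c \<ge> 0"
  shows "W2 \<nu> \<mu> \<le> sqrt c"
proof -
  have "(INF \<gamma>\<in>couplings \<nu> \<mu>. \<integral>\<^sup>+ p. ennreal ((norm (fst p - snd p))\<^sup>2) \<partial>\<gamma>) \<le> ennreal c"
    using assms by (meson INF_lower order_trans)
  then have "enn2real (INF \<gamma>\<in>couplings \<nu> \<mu>. \<integral>\<^sup>+ p. ennreal ((norm (fst p - snd p))\<^sup>2) \<partial>\<gamma>) \<le> c"
    using assms(3) by (metis enn2real_ennreal enn2real_mono ennreal_less_top)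
  then show ?thesis unfolding W2_def by simp
qed

lemma approx_exists:
  fixes \<mu> :: "'a::{real_normed_vector, second_countable_topology} measure"
  assumes mu: "\<mu> \<in> Pb" and sub: "msupp \<mu> \<subseteq> ball 0 R0" and R0: "R0 > 0" and eps: "\<epsilon> > 0"
  shows "\<exists>\<nu>. \<nu> \<in> Pb \<and> finite (msupp \<nu>) \<and> msupp \<nu> \<subseteq> ball 0 (R0+1) \<and> W2 \<nu> \<mu> \<le> 2 * \<epsilon>"
proof -
  have smu: "sets \<mu> = sets borel" and pmu: "prob_space \<mu>" using mu unfolding Pb_def by auto
  interpret prob_space \<mu> by (rule pmu)
  have spmu: "space \<mu> = UNIV" using sets_eq_imp_space_eq[OF smu] by simp
  obtain D :: "'a set" where D: "countable D" "\<And>X. open X \<Longrightarrow> X \<noteq> {} \<Longrightarrow> \<exists>d\<in>D. d \<in> X"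
    using countable_dense_exists by blast
  have "D \<noteq> {}" using D(2)[of UNIV] by auto
  define d where "d = from_nat_into D"
  have rd: "range d = D" unfolding d_def using range_from_nat_into[OF \<open>D \<noteq> {}\<close> D(1)] .
  define R1 where "R1 = R0 + 1"
  have R1: "R1 > 0" "R0 < R1" using R0 unfolding R1_def by auto
  define P where "P k x = (dist x (d k) < \<epsilon> \<and> norm (d k) < R1)" for k x
  define C where "C n = ball 0 R0 \<inter> - (\<Union>k\<in>{..n}. {x. P k x})" for n
  have Cmeas: "C n \<in> sets \<mu>" for n
  proof -
    have "open (\<Union>k\<in>{..n}. {x. P k x})" unfolding P_def using open_cond by blast
    then have "closed (- (\<Union>k\<in>{..n}. {x. P k x}))" by (rule closed_Compl)
    then show ?thesis unfolding C_def smu by (intro sets.Int borel_open borel_closed) auto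
  qed
  have decC: "decseq C" unfolding C_def decseq_def by auto
  have interC: "(\<Inter>n. C n) = {}"
  proof -
   { fix x assume x: "\<forall>n. x \<in> C n"
    then have "norm x < R0" unfolding C_def by auto
    then have "x \<in> ball x \<epsilon> \<inter> ball 0 R1" using eps R1 by auto
    then obtain y where "y \<in> D" "y \<in> ball x \<epsilon> \<inter> ball 0 R1" using D(2)[of "ball x \<epsilon> \<inter> ball 0 R1"] by blast
    then obtain k where "y = d k" using rd by auto
    then have "P k x" unfolding P_def using \<open>y \<in> ball x \<epsilon> \<inter> ball 0 R1\<close> by auto
    then have "x \<notin> C k" unfolding C_def by auto
    then have False using x by auto }
    then show ?thesis by blast
  qed
  have lim: "(\<lambda>n. measure \<mu> (C n)) \<longlonglongrightarrow> 0"
    using finite_Lim_measure_decseq[of C] Cmeas decC interC by auto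
  have "\<epsilon>\<^sup>2 / R0\<^sup>2 > 0" using eps R0 by auto
  from order_tendstoD(2)[OF lim this] obtain n where n: "measure \<mu> (C n) < \<epsilon>\<^sup>2 / R0\<^sup>2"
    by (auto simp: eventually_sequentially)
  then have n2: "R0\<^sup>2 * measure \<mu> (C n) \<le> \<epsilon>\<^sup>2" using R0 by (simp add: field_simps)
  define q where "q = qf d R1 \<epsilon> n"
  have qm: "q \<in> borel_measurable borel" unfolding q_def by (rule qf_meas)
  have qm': "q \<in> \<mu> \<rightarrow>\<^sub>M borel" using qm measurable_cong_sets[OF smu refl] by blast
  define \<nu> where "\<nu> = distr \<mu> borel q"
  define S where "S = {y \<in> insert 0 (d ` {..n}). norm y < R1}"
  have finS: "finite S" unfolding S_def by auto
  have Ssub: "S \<subseteq> ball 0 R1" unfolding S_def by auto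
  have snu: "sets \<nu> = sets borel" unfolding \<nu>_def by simp
  have pnu: "prob_space \<nu>" unfolding \<nu>_def by (rule prob_space_distr[OF qm'])
  have "AE x in \<nu>. x \<in> S"
    unfolding \<nu>_def
  proof (subst AE_distr_iff[OF qm'])
    show "{x \<in> space borel. x \<in> S} \<in> sets borel"
      using finS by (simp add: borel_closed finite_imp_closed)
    show "AE x in \<mu>. q x \<in> S"
    proof (intro AE_I2)
      fix x show "q x \<in> S" unfolding S_def q_def
        using qf_range[of d R1 \<epsilon> n x] qf_norm[OF R1(1), of d \<epsilon> n x] by blast
    qed
  qed
  then have msnu: "msupp \<nu> \<subseteq> S" by (intro msupp_subset_closed snu finite_imp_closed finS)
  have nuPb: "\<nu> \<in> Pb" unfolding Pb_def using snu pnu msnu finS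
    by (auto intro: bounded_subset finite_imp_bounded)
  define g where "g x = (q x, x)" for x
  have gm: "g \<in> \<mu> \<rightarrow>\<^sub>M borel"
  proof -
    have "g \<in> \<mu> \<rightarrow>\<^sub>M (borel \<Otimes>\<^sub>M borel)" unfolding g_def
      by (intro measurable_Pair qm') (simp add: measurable_cong_sets[OF smu refl])
    then show ?thesis by (simp add: borel_prod)
  qed
  have fstm: "fst \<in> (borel :: ('a \<times> 'a) measure) \<rightarrow>\<^sub>M borel"
    using measurable_fst[of "borel::'a measure" "borel::'a measure"] by (simp add: borel_prod)
  have sndm: "snd \<in> (borel :: ('a \<times> 'a) measure) \<rightarrow>\<^sub>M borel"
    using measurable_snd[of "borel::'a measure" "borel::'a measure"] by (simp add: borel_prod)
  define \<gamma> where "\<gamma> = distr \<mu> borel g"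
  have coup: "\<gamma> \<in> couplings \<nu> \<mu>"
  proof -
    have "distr \<gamma> borel fst = distr \<mu> borel (fst \<circ> g)" unfolding \<gamma>_def by (rule distr_distr[OF fstm gm])
    also have "fst \<circ> g = q" unfolding g_def by auto
    finally have 1: "distr \<gamma> borel fst = \<nu>" unfolding \<nu>_def .
    have "distr \<gamma> borel snd = distr \<mu> borel (snd \<circ> g)" unfolding \<gamma>_def by (rule distr_distr[OF sndm gm])
    also have "snd \<circ> g = (\<lambda>x. x)" unfolding g_def by auto
    also have "distr \<mu> borel (\<lambda>x. x) = \<mu>" by (rule distr_id2) (simp add: smu)
    finally have 2: "distr \<gamma> borel snd = \<mu>" .
    show ?thesis unfolding couplings_def using 1 2 prob_space_distr[OF gm] by (auto simp: \<gamma>_def)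
  qed
  have costm: "(\<lambda>p. ennreal ((norm (fst p - snd p))\<^sup>2)) \<in> borel_measurable (borel :: ('a \<times> 'a) measure)"
  proof -
    have "(\<lambda>p::'a\<times>'a. (norm (fst p - snd p))\<^sup>2) \<in> borel_measurable borel"
      by (intro borel_measurable_continuous_onI continuous_intros)
    then show ?thesis by measurable
  qed
  have costm': "(\<lambda>p. ennreal ((norm (fst p - snd p))\<^sup>2)) \<in> borel_measurable (distr \<mu> borel g)"
    using costm by simp
  have aeR: "AE x in \<mu>. norm x < R0"
    using AE_in_msupp[OF smu] by (rule AE_mp) (rule AE_I2, insert sub, auto)
  have "(\<integral>\<^sup>+ p. ennreal ((norm (fst p - snd p))\<^sup>2) \<partial>\<gamma>) = (\<integral>\<^sup>+ x. ennreal ((norm (q x - x))\<^sup>2) \<partial>\<mu>)"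
    unfolding \<gamma>_def by (subst nn_integral_distr[OF gm costm']) (simp add: g_def)
  also have "\<dots> \<le> (\<integral>\<^sup>+ x. (ennreal (\<epsilon>\<^sup>2) + ennreal (R0\<^sup>2) * indicator (C n) x) \<partial>\<mu>)"
  proof (rule nn_integral_mono_AE)
    show "AE x in \<mu>. ennreal ((norm (q x - x))\<^sup>2) \<le> ennreal (\<epsilon>\<^sup>2) + ennreal (R0\<^sup>2) * indicator (C n) x"
      using aeR
    proof (rule AE_mp, intro AE_I2 impI)
      fix x :: 'a assume x: "norm x < R0"
      show "ennreal ((norm (q x - x))\<^sup>2) \<le> ennreal (\<epsilon>\<^sup>2) + ennreal (R0\<^sup>2) * indicator (C n) x"
      proof (cases "\<exists>k\<le>n. P k x")
        case True
        then obtain k where "k \<le> n" "P k x" by auto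
        then have "dist x (q x) < \<epsilon>" unfolding q_def P_def using qf_found by blast
        then have "norm (q x - x) < \<epsilon>" by (simp add: dist_norm norm_minus_commute)
        then have "(norm (q x - x))\<^sup>2 \<le> \<epsilon>\<^sup>2" by (intro power_mono) auto
        then have "ennreal ((norm (q x - x))\<^sup>2) \<le> ennreal (\<epsilon>\<^sup>2)" by (rule ennreal_leI)
        then show ?thesis by (rule order_trans[OF _ add_increasing2[OF zero_le order_refl]])
      next
        case False
        then have "q x = 0" unfolding q_def P_def by (intro qf_notfound) auto
        moreover have "x \<in> C n" using False x unfolding C_def by auto
        moreover have "(norm x)\<^sup>2 \<le> R0\<^sup>2" using x by (intro power_mono) auto
        ultimately have "ennreal ((norm (q x - x))\<^sup>2) \<le> ennreal (R0\<^sup>2) * indicator (C n) x"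
          by (simp add: ennreal_leI)
        then show ?thesis by (rule add_increasing[OF zero_le])
      qed
    qed
  qed
  also have "\<dots> = ennreal (\<epsilon>\<^sup>2) + ennreal (R0\<^sup>2) * emeasure \<mu> (C n)"
  proof -
    have "(\<integral>\<^sup>+ x. (ennreal (\<epsilon>\<^sup>2) + ennreal (R0\<^sup>2) * indicator (C n) x) \<partial>\<mu>)
      = (\<integral>\<^sup>+ x. ennreal (\<epsilon>\<^sup>2) \<partial>\<mu>) + (\<integral>\<^sup>+ x. ennreal (R0\<^sup>2) * indicator (C n) x \<partial>\<mu>)"
      by (rule nn_integral_add) (use Cmeas in auto)
    also have "(\<integral>\<^sup>+ x. ennreal (\<epsilon>\<^sup>2) \<partial>\<mu>) = ennreal (\<epsilon>\<^sup>2)"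
      by (simp only: nn_integral_const emeasure_space_1 mult_1_right)
    also have "(\<integral>\<^sup>+ x. ennreal (R0\<^sup>2) * indicator (C n) x \<partial>\<mu>) = ennreal (R0\<^sup>2) * emeasure \<mu> (C n)"
      by (rule nn_integral_cmult_indicator[OF Cmeas])
    finally show ?thesis .
  qed
  also have "\<dots> = ennreal (\<epsilon>\<^sup>2 + R0\<^sup>2 * measure \<mu> (C n))"
    by (simp only: emeasure_eq_measure ennreal_plus[symmetric] ennreal_mult[symmetric] zero_le_power2
      measure_nonneg mult_nonneg_nonneg zero_le_power2)
  also have "\<dots> \<le> ennreal (2 * \<epsilon>\<^sup>2)" using n2 by (intro ennreal_leI) simp
  finally have "W2 \<nu> \<mu> \<le> sqrt (2 * \<epsilon>\<^sup>2)" using coup by (intro W2_le_cost) auto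
  also have "sqrt (2 * \<epsilon>\<^sup>2) \<le> 2 * \<epsilon>"
  proof -
    have "sqrt (2 * \<epsilon>\<^sup>2) = sqrt 2 * \<epsilon>" using eps by (simp add: real_sqrt_mult)
    also have "\<dots> \<le> 2 * \<epsilon>" using eps sqrt2_less_2 by (intro mult_right_mono) auto
    finally show ?thesis .
  qed
  finally have W: "W2 \<nu> \<mu> \<le> 2 * \<epsilon>" .
  have "finite (msupp \<nu>)" using msnu finS by (rule finite_subset)
  moreover have "msupp \<nu> \<subseteq> ball 0 (R0+1)" using msnu Ssub unfolding R1_def by (rule order_trans)
  ultimately show ?thesis using nuPb W by blast
qed



lemma step_ineq:
  fixes x v :: "'a::real_inner"
  assumes iv: "inner v x \<le> a * (1 + (norm x)\<^sup>2)" and nv: "norm v < \<rho>" and tau: "0 < \<tau>"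
    and trho: "\<tau> * \<rho>\<^sup>2 \<le> 1" and a: "a \<ge> 0" and c: "1 + (norm x)\<^sup>2 \<le> c"
  shows "1 + (norm (x + \<tau> *\<^sub>R v))\<^sup>2 \<le> c * (1 + (2 * a + 1) * \<tau>)"
proof -
  have eq: "(norm (x + \<tau> *\<^sub>R v))\<^sup>2 = (norm x)\<^sup>2 + 2 * \<tau> * inner v x + \<tau>\<^sup>2 * (norm v)\<^sup>2"
  proof -
    have "(norm (x + \<tau> *\<^sub>R v))\<^sup>2 = inner (x + \<tau> *\<^sub>R v) (x + \<tau> *\<^sub>R v)" by (rule power2_norm_eq_inner)
    also have "\<dots> = inner x x + 2 * \<tau> * inner v x + \<tau>\<^sup>2 * inner v v"
      by (simp add: inner_add_left inner_add_right inner_commute[of x v] power2_eq_square algebra_simps)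
    also have "\<dots> = (norm x)\<^sup>2 + 2 * \<tau> * inner v x + \<tau>\<^sup>2 * (norm v)\<^sup>2" by (simp add: power2_norm_eq_inner)
    finally show ?thesis .
  qed
  have "(norm v)\<^sup>2 \<le> \<rho>\<^sup>2" using nv by (intro power_mono) auto
  then have "\<tau>\<^sup>2 * (norm v)\<^sup>2 \<le> \<tau>\<^sup>2 * \<rho>\<^sup>2" by (intro mult_left_mono) auto
  also have "\<tau>\<^sup>2 * \<rho>\<^sup>2 = \<tau> * (\<tau> * \<rho>\<^sup>2)" by (simp add: power2_eq_square)
  also have "\<dots> \<le> \<tau>" using trho tau by (simp add: mult_le_cancel_left1)
  finally have t1: "\<tau>\<^sup>2 * (norm v)\<^sup>2 \<le> \<tau>" .
  have t2: "2 * \<tau> * inner v x \<le> 2 * \<tau> * (a * (1 + (norm x)\<^sup>2))" using iv tau by simp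
  have t3: "\<tau> \<le> \<tau> * (1 + (norm x)\<^sup>2)" using tau by simp
  have "1 + (norm (x + \<tau> *\<^sub>R v))\<^sup>2 \<le> (1 + (norm x)\<^sup>2) * (1 + (2 * a + 1) * \<tau>)"
    unfolding eq using t1 t2 t3 by (simp add: algebra_simps)
  also have "\<dots> \<le> c * (1 + (2 * a + 1) * \<tau>)" using c a tau by (intro mult_right_mono) auto
  finally show ?thesis .
qed

lemma msupp_cball:
  fixes M :: "'a::real_normed_vector measure"
  assumes "sets M = sets borel" "AE x in M. 1 + (norm x)\<^sup>2 \<le> c"
  shows "msupp M \<subseteq> cball 0 c"
proof (rule msupp_subset_closed[OF assms(1)])
  show "AE x in M. x \<in> cball 0 c" using assms(2)
  proof (rule AE_mp, intro AE_I2 impI)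
    fix x :: 'a assume h: "1 + (norm x)\<^sup>2 \<le> c"
    have "norm x \<le> 1 + (norm x)\<^sup>2"
    proof (cases "norm x \<le> 1")
      case True then show ?thesis by (smt (verit) zero_le_power2)
    next
      case False then have "norm x \<le> norm x * norm x" by (simp add: mult_le_cancel_left1)
      then show ?thesis by (simp add: power2_eq_square)
    qed
    then show "x \<in> cball 0 c" using h by simp
  qed
qed simp


lemma euler_core:
  fixes F :: "'a::{real_inner, second_countable_topology} measure \<Rightarrow> ('a \<times> 'a) measure"
  assumes F_Pb: "\<And>\<mu>. \<mu> \<in> Pb \<Longrightarrow> F \<mu> \<in> Pb"
    and F_marg: "\<And>\<mu>. \<mu> \<in> Pb \<Longrightarrow> distr (F \<mu>) borel fst = \<mu>"
    and a: "a \<ge> 0" and Fa: "\<forall>\<mu>\<in>Pb. AE p in F \<mu>. inner (snd p) (fst p) \<le> a * (1 + (norm (fst p))\<^sup>2)"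
    and rho: "\<forall>\<mu>\<in>Pb. msupp \<mu> \<subseteq> ball 0 Rs \<longrightarrow> msupp (F \<mu>) \<subseteq> ball 0 \<rho>"
    and Rs: "Rs = (1 + R1\<^sup>2) * exp ((2 * a + 1) * (T + 1)) + 1"
    and nu: "\<nu> \<in> Pb" and nusub: "msupp \<nu> \<subseteq> ball 0 R1"
    and tau: "0 < \<tau>" "\<tau> \<le> 1" "\<tau> * \<rho>\<^sup>2 \<le> 1" and T: "T > 0"
  shows "euler_set F \<nu> \<tau> T \<rho> \<noteq> {}"
proof -
  define b where "b = 2 * a + 1"
  define Cst where "Cst = (1 + R1\<^sup>2) * exp (b * (T + 1))"
  have Rs': "Rs = Cst + 1" unfolding Rs Cst_def b_def ..
  define N where "N = nat \<lceil>T / \<tau>\<rceil>"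
  define s where "s n = (1 + R1\<^sup>2) * (1 + b * \<tau>) ^ n" for n
  define M where "M = rec_nat \<nu> (\<lambda>n m. distr (F m) borel (exp_map \<tau>))"
  have M0: "M 0 = \<nu>" and MS: "\<And>n. M (Suc n) = distr (F (M n)) borel (exp_map \<tau>)"
    unfolding M_def by auto
  have b0: "b \<ge> 1" using a unfolding b_def by simp
  have sN: "s n \<le> Cst" if "n \<le> N" for n
  proof -
    have "real N < T / \<tau> + 1" unfolding N_def using ceiling_correct[of "T / \<tau>"] T tau by auto
    moreover have "real n \<le> real N" using that by simp
    ultimately have "real n < T / \<tau> + 1" by linarith
    then have "real n * \<tau> < (T / \<tau> + 1) * \<tau>" using tau by (intro mult_strict_right_mono) auto
    also have "(T / \<tau> + 1) * \<tau> = T + \<tau>" using tau by (simp add: field_simps)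
    finally have "real n * \<tau> \<le> T + 1" using tau by linarith
    then have "b * \<tau> * real n \<le> b * (T + 1)" using b0 by (simp add: mult.assoc mult.commute[of \<tau>] mult_left_mono)
    have "(1 + b * \<tau>) ^ n \<le> exp (b * \<tau>) ^ n" using b0 tau by (intro power_mono) auto
    also have "\<dots> = exp (b * \<tau> * real n)" by (simp add: exp_of_nat_mult[symmetric] mult.commute)
    also have "\<dots> \<le> exp (b * (T + 1))" using \<open>b * \<tau> * real n \<le> b * (T + 1)\<close> by simp
    finally show ?thesis unfolding s_def Cst_def by (intro mult_left_mono) auto
  qed
  have fstm: "fst \<in> (borel :: ('a \<times> 'a) measure) \<rightarrow>\<^sub>M borel"
    using measurable_fst[of "borel::'a measure" "borel::'a measure"] by (simp add: borel_prod)
  have sndm: "snd \<in> (borel :: ('a \<times> 'a) measure) \<rightarrow>\<^sub>M borel"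
    using measurable_snd[of "borel::'a measure" "borel::'a measure"] by (simp add: borel_prod)
  have expm: "exp_map \<tau> \<in> (borel :: ('a \<times> 'a) measure) \<rightarrow>\<^sub>M borel"
    unfolding exp_map_def[abs_def] by (intro borel_measurable_continuous_onI continuous_intros)
  have setm: "{x \<in> space borel. 1 + (norm (x::'a))\<^sup>2 \<le> c} \<in> sets borel" for c
    by measurable
  have velF: "AE p in F \<mu>. norm (snd p) < \<rho>"
    if mu: "\<mu> \<in> Pb" and ae: "AE x in \<mu>. 1 + (norm x)\<^sup>2 \<le> c" and cC: "c \<le> Cst" for \<mu> c
  proof -
    have "sets \<mu> = sets borel" using mu unfolding Pb_def by auto
    then have "msupp \<mu> \<subseteq> cball 0 c" by (rule msupp_cball[OF _ ae])
    also have "\<dots> \<subseteq> ball 0 Rs" using cC unfolding Rs' by auto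
    finally have msub: "msupp (F \<mu>) \<subseteq> ball 0 \<rho>" using rho mu by blast
    have sF: "sets (F \<mu>) = sets borel" using F_Pb[OF mu] unfolding Pb_def by auto
    have "AE p in F \<mu>. p \<in> ball 0 \<rho>" using AE_in_msupp[OF sF]
      by (rule AE_mp) (rule AE_I2, insert msub, auto)
    then show ?thesis by (rule AE_mp) (intro AE_I2 impI, auto intro: le_less_trans[OF norm_snd_le])
  qed
  have step: "distr (F \<mu>) borel (exp_map \<tau>) \<in> Pb \<and>
      (AE x in distr (F \<mu>) borel (exp_map \<tau>). 1 + (norm x)\<^sup>2 \<le> c * (1 + b * \<tau>))"
    if mu: "\<mu> \<in> Pb" and ae: "AE x in \<mu>. 1 + (norm x)\<^sup>2 \<le> c" and cC: "c \<le> Cst" for \<mu> c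
  proof -
    have FPb: "F \<mu> \<in> Pb" by (rule F_Pb[OF mu])
    have sF: "sets (F \<mu>) = sets borel" and pF: "prob_space (F \<mu>)" using FPb unfolding Pb_def by auto
    have fstm': "fst \<in> F \<mu> \<rightarrow>\<^sub>M borel" by (subst measurable_cong_sets[OF sF refl]) (rule fstm)
    have expm': "exp_map \<tau> \<in> F \<mu> \<rightarrow>\<^sub>M borel" by (subst measurable_cong_sets[OF sF refl]) (rule expm)
    have ae1: "AE p in F \<mu>. 1 + (norm (fst p))\<^sup>2 \<le> c"
    proof -
      have "AE x in distr (F \<mu>) borel fst. 1 + (norm x)\<^sup>2 \<le> c" using ae by (simp only: F_marg[OF mu])
      then show ?thesis by (subst (asm) AE_distr_iff[OF fstm' setm])
    qed
    have ae2: "AE p in F \<mu>. inner (snd p) (fst p) \<le> a * (1 + (norm (fst p))\<^sup>2)" using Fa mu by blast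
    have ae3: "AE p in F \<mu>. norm (snd p) < \<rho>" by (rule velF[OF mu ae cC])
    have "AE p in F \<mu>. 1 + (norm (exp_map \<tau> p))\<^sup>2 \<le> c * (1 + b * \<tau>)"
      using ae1 ae2 ae3
    proof eventually_elim
      case (elim p)
      have "1 + (norm (fst p + \<tau> *\<^sub>R snd p))\<^sup>2 \<le> c * (1 + (2 * a + 1) * \<tau>)"
        by (rule step_ineq[OF elim(2) elim(3) tau(1) tau(3) a elim(1)])
      then show ?case unfolding exp_map_def b_def .
    qed
    then have aeD: "AE x in distr (F \<mu>) borel (exp_map \<tau>). 1 + (norm x)\<^sup>2 \<le> c * (1 + b * \<tau>)"
      by (subst AE_distr_iff[OF expm' setm])
    have sD: "sets (distr (F \<mu>) borel (exp_map \<tau>)) = sets borel" by simp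
    have pD: "prob_space (distr (F \<mu>) borel (exp_map \<tau>))"
      using pF by (intro prob_space.prob_space_distr expm')
    have "bounded (msupp (distr (F \<mu>) borel (exp_map \<tau>)))"
      by (rule bounded_subset[OF bounded_cball msupp_cball[OF sD aeD]])
    then show ?thesis using sD pD aeD unfolding Pb_def by auto
  qed
  have key: "M n \<in> Pb \<and> (AE x in M n. 1 + (norm x)\<^sup>2 \<le> s n)" if "n \<le> N" for n
    using that
  proof (induct n)
    case 0
    have "sets \<nu> = sets borel" using nu unfolding Pb_def by auto
    from AE_in_msupp[OF this] have "AE x in \<nu>. 1 + (norm x)\<^sup>2 \<le> s 0"
    proof (rule AE_mp, intro AE_I2 impI)
      fix x :: 'a assume "x \<in> msupp \<nu>"
      then have "norm x < R1" using nusub by auto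
      then have "(norm x)\<^sup>2 \<le> R1\<^sup>2" by (intro power_mono) auto
      then show "1 + (norm x)\<^sup>2 \<le> s 0" unfolding s_def by simp
    qed
    then show ?case unfolding M0 using nu by blast
  next
    case (Suc n)
    then have IH: "M n \<in> Pb" "AE x in M n. 1 + (norm x)\<^sup>2 \<le> s n" by auto
    have sC: "s n \<le> Cst" using Suc(2) sN by simp
    have eqs: "s (Suc n) = s n * (1 + b * \<tau>)" unfolding s_def by (simp only: power_Suc2 mult.assoc)
    show ?case unfolding MS eqs by (rule step[OF IH sC])
  qed
  have vel: "vel_sq (F (M n)) \<le> ennreal (\<rho>\<^sup>2)" if "n \<le> N" for n
  proof -
    have ae: "AE p in F (M n). norm (snd p) < \<rho>" by (rule velF[OF key[OF that, THEN conjunct1] key[OF that, THEN conjunct2] sN[OF that]])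
    have pF: "prob_space (F (M n))" using F_Pb[OF key[OF that, THEN conjunct1]] unfolding Pb_def by auto
    have "vel_sq (F (M n)) \<le> (\<integral>\<^sup>+ p. ennreal (\<rho>\<^sup>2) \<partial>F (M n))"
      unfolding vel_sq_def
    proof (rule nn_integral_mono_AE)
      show "AE p in F (M n). ennreal ((norm (snd p))\<^sup>2) \<le> ennreal (\<rho>\<^sup>2)"
        using ae by (rule AE_mp) (intro AE_I2 impI ennreal_leI power_mono, auto)
    qed
    also have "\<dots> = ennreal (\<rho>\<^sup>2)"
      using prob_space.emeasure_space_1[OF pF] by simp
    finally show ?thesis .
  qed
  have "(M, \<lambda>n. F (M n)) \<in> euler_set F \<nu> \<tau> T \<rho>"
    unfolding euler_set_def Let_def N_def[symmetric]
  proof (simp only: mem_Collect_eq case_prod_conv, intro conjI allI impI)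
    show "M 0 = \<nu>" by (rule M0)
    show "F (M n) = F (M n)" for n by (rule refl)
    show "vel_sq (F (M n)) \<le> ennreal (\<rho>\<^sup>2)" if "n < N" for n using vel that by simp
    show "M n = distr (F (M (n - 1))) borel (exp_map \<tau>)" if "1 \<le> n \<and> n \<le> N" for n
      using that MS[of "n - 1"] by simp
    show "M n \<in> Pb" if "n \<le> N" for n using key[OF that] by (rule conjunct1)
  qed
  then show ?thesis by blast
qed

theorem lemma6p12:
  fixes F :: "'a::{real_inner, complete_space, second_countable_topology} measure \<Rightarrow> ('a \<times> 'a) measure"
    and \<mu>0 :: "'a measure" and T :: real
  assumes F_Pb: "\<And>\<mu>. \<mu> \<in> Pb \<Longrightarrow> F \<mu> \<in> Pb"
    and F_marg: "\<And>\<mu>. \<mu> \<in> Pb \<Longrightarrow> distr (F \<mu>) borel fst = \<mu>"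
    and F1: "\<exists>a\<ge>0. \<forall>\<mu>\<in>Pb. AE p in F \<mu>. inner (snd p) (fst p) \<le> a * (1 + (norm (fst p))\<^sup>2)"
    and F2: "\<And>R. R > 0 \<Longrightarrow> \<exists>\<rho>>0. \<forall>\<mu>\<in>Pb. msupp \<mu> \<subseteq> ball 0 R \<longrightarrow> msupp (F \<mu>) \<subseteq> ball 0 \<rho>"
    and mu0: "\<mu>0 \<in> Pb"
    and T: "T > 0"
  shows "approx_solvable F \<mu>0 T"
  proof -
  obtain a where a: "a \<ge> 0" "\<forall>\<mu>\<in>Pb. AE p in F \<mu>. inner (snd p) (fst p) \<le> a * (1 + (norm (fst p))\<^sup>2)"
    using F1 by blast
  have "bounded (msupp \<mu>0)" using mu0 unfolding Pb_def by auto
  then obtain R0 where R0: "R0 > 0" "msupp \<mu>0 \<subseteq> ball 0 R0" using bounded_subset_ballD by blast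
  define R1 where "R1 = R0 + 1"
  define Rs where "Rs = (1 + R1\<^sup>2) * exp ((2 * a + 1) * (T + 1)) + 1"
  have "Rs > 0" unfolding Rs_def by (simp add: add_pos_nonneg)
  then obtain \<rho> where rho0: "\<rho> > 0" and rho: "\<forall>\<mu>\<in>Pb. msupp \<mu> \<subseteq> ball 0 Rs \<longrightarrow> msupp (F \<mu>) \<subseteq> ball 0 \<rho>"
    using F2 by blast
  have "\<forall>j. \<exists>\<nu>. \<nu> \<in> Pb \<and> finite (msupp \<nu>) \<and> msupp \<nu> \<subseteq> ball 0 (R0+1) \<and> W2 \<nu> \<mu>0 \<le> 2 * inverse (real (Suc j))"
    using approx_exists[OF mu0 R0(2) R0(1)] by simp
  then obtain \<mu>s where hs: "\<And>j. \<mu>s j \<in> Pb \<and> finite (msupp (\<mu>s j)) \<and> msupp (\<mu>s j) \<subseteq> ball 0 (R0+1)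
      \<and> W2 (\<mu>s j) \<mu>0 \<le> 2 * inverse (real (Suc j))"
    using choice[of "\<lambda>j \<nu>. \<nu> \<in> Pb \<and> finite (msupp \<nu>) \<and> msupp \<nu> \<subseteq> ball 0 (R0+1) \<and> W2 \<nu> \<mu>0 \<le> 2 * inverse (real (Suc j))"]
    by blast
  have lim2: "(\<lambda>j. 2 * inverse (real (Suc j))) \<longlonglongrightarrow> 0"
    using tendsto_mult[OF tendsto_const[of 2] LIMSEQ_inverse_real_of_nat] by simp
  have W2nn: "W2 \<mu> \<nu> \<ge> 0" for \<mu> \<nu> :: "'a measure" unfolding W2_def by simp
  have limW: "(\<lambda>j. W2 (\<mu>s j) \<mu>0) \<longlonglongrightarrow> 0"
    by (rule tendsto_sandwich[of "\<lambda>_. 0" _ sequentially "\<lambda>j. 2 * inverse (real (Suc j))"])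
       (use W2nn hs lim2 in auto)
  define \<tau>0 where "\<tau>0 = min 1 (inverse (\<rho>\<^sup>2))"
  have t0: "\<tau>0 > 0" unfolding \<tau>0_def using rho0 by simp
  have eul: "euler_set F (\<mu>s j) \<tau> T \<rho> \<noteq> {}" if tau: "0 < \<tau>" "\<tau> < \<tau>0" for \<tau> j
  proof (rule euler_core[OF F_Pb F_marg a(1) a(2) rho Rs_def])
    show "\<mu>s j \<in> Pb" using hs by blast
    show "msupp (\<mu>s j) \<subseteq> ball 0 R1" using hs unfolding R1_def by blast
    show "0 < \<tau>" by (rule tau(1))
    show "\<tau> \<le> 1" using tau unfolding \<tau>0_def by simp
    have "\<tau> < inverse (\<rho>\<^sup>2)" using tau unfolding \<tau>0_def by simp
    then have "\<tau> * \<rho>\<^sup>2 < inverse (\<rho>\<^sup>2) * \<rho>\<^sup>2" using rho0 by (intro mult_strict_right_mono) auto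
    then show "\<tau> * \<rho>\<^sup>2 \<le> 1" using rho0 by simp
    show "T > 0" by (rule T)
  qed
  show ?thesis unfolding approx_solvable_def
    using t0 rho0 hs limW eul by blast
qed

end
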